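(* Let $U$ be a Hilbert space, $T: U\rightrightarrows U$, $(\hat u,\hat w)\in\operatorname{graph}T$, and $P,N,M\in\mathcal{L}(U;U)$ with $M\ge0$ and $M\ge P$. Let $\alpha>0$, and if $\alpha\in(0,1)$ suppose $(M,M-P)\in\mathcal{P}(T^{-1}(\hat w),\hat u)$. Then $T$ is $(P,N,M)$-partially subregular at $(\hat u,\hat w)$ if it is $(\alpha P,\alpha N,M)$-partially subregular there. Conversely, if $(M,M-\alpha P)\in\mathcal{P}(T^{-1}(\hat w),\hat u)$ in case $\alpha>1$, then $T$ is $(\alpha P,\alpha N,M)$-partially subregular at $(\hat u,\hat w)$ if it is $(P,N,M)$-partially subregular there. In particular, if $(M,M-\max\{\alpha,1\}P)\in\mathcal{P}(T^{-1}(\hat w),\hat u)$, the two properties are equivalent.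
   Context: For $T\in\mathcal{L}(U;U)$ (not necessarily positive): $\|x\|^2_T:=\langle Tx,x\rangle$, $\operatorname{dist}^2_T(z,A):=\inf_{u\in A}\|z-u\|^2_T$ ($\inf\emptyset=+\infty$); $T\ge S$ means $T-S$ positive semidefinite. For $M,P,N\in\mathcal{L}(U;U)$ with $N\ge0$, $M\ge0$, $M\ge P$, $T$ is $(P,N,M)$-partially subregular at $(\hat u,\hat w)$ if there is a neighbourhood $\mathcal{U}\ni\hat u$ with $\operatorname{dist}^2_N(\hat w,T(u)) + \operatorname{dist}^2_{M-P}(u,T^{-1}(\hat w))\ge\operatorname{dist}^2_M(u,T^{-1}(\hat w))$ for all $u\in\mathcal{U}$. For $M,M'\in\mathcal{L}(U;U)$, $A\subset U$, $\hat u\in A$: $(M,M')\in\mathcal{P}(A,\hat u)$ means there is a neighbourhood $\mathcal{U}'\ni\hat u$ such that each $u\in\mathcal{U}'$ has a common projection onto $A$ with respect to $\|\cdot\|_M$ and $\|\cdot\|_{M'}$ (a point of $A$ minimising both $\|u-\cdot\|_M$ and $\|u-\cdot\|_{M'}$ over $A$). *)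

theory Defs
  imports "HOL-Analysis.Analysis"
begin

definition opsq :: "('a::real_inner \<Rightarrow> 'a) \<Rightarrow> 'a \<Rightarrow> real" where
  "opsq T x = inner (T x) x"

definition op_psd :: "('a::real_inner \<Rightarrow> 'a) \<Rightarrow> bool" where
  "op_psd T \<longleftrightarrow> (\<forall>x. 0 \<le> opsq T x)"

definition op_ge :: "('a::real_inner \<Rightarrow> 'a) \<Rightarrow> ('a \<Rightarrow> 'a) \<Rightarrow> bool" where
  "op_ge T S \<longleftrightarrow> op_psd (\<lambda>x. T x - S x)"

text \<open>Squared distance w.r.t. T, with inf of the empty set = +infinity.\<close>
definition opdist2 :: "('a::real_inner \<Rightarrow> 'a) \<Rightarrow> 'a \<Rightarrow> 'a set \<Rightarrow> ereal" where
  "opdist2 T z A = (INF u\<in>A. ereal (opsq T (z - u)))"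

definition op_minus :: "('a::real_vector \<Rightarrow> 'a) \<Rightarrow> ('a \<Rightarrow> 'a) \<Rightarrow> 'a \<Rightarrow> 'a" where
  "op_minus T S = (\<lambda>x. T x - S x)"

definition op_scale :: "real \<Rightarrow> ('a::real_vector \<Rightarrow> 'a) \<Rightarrow> 'a \<Rightarrow> 'a" where
  "op_scale c T = (\<lambda>x. c *\<^sub>R T x)"

definition sv_inv :: "('a \<Rightarrow> 'b set) \<Rightarrow> 'b \<Rightarrow> 'a set" where
  "sv_inv T w = {u. w \<in> T u}"

text \<open>(P,N,M)-partial subregularity of T at (uh,wh): the defining inequality on a
  neighbourhood of uh.  The standing conditions N \<ge> 0, M \<ge> 0, M \<ge> P are stated
  separately where needed.\<close>
definition partially_subregular ::
  "('a::real_inner \<Rightarrow> 'a set) \<Rightarrow> ('a \<Rightarrow> 'a) \<Rightarrow> ('a \<Rightarrow> 'a) \<Rightarrow> ('a \<Rightarrow> 'a) \<Rightarrow> 'a \<Rightarrow> 'a \<Rightarrow> bool" where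
  "partially_subregular T P N M uh wh \<longleftrightarrow>
     (\<exists>V. open V \<and> uh \<in> V \<and>
        (\<forall>u\<in>V. opdist2 N wh (T u) + opdist2 (op_minus M P) u (sv_inv T wh)
                 \<ge> opdist2 M u (sv_inv T wh)))"

text \<open>(M,M') \<in> \<P>(A,uh): near uh every point has a common projection onto A
  w.r.t. the (squared) M- and M'-distances.\<close>
definition common_proj ::
  "('a::real_inner \<Rightarrow> 'a) \<Rightarrow> ('a \<Rightarrow> 'a) \<Rightarrow> 'a set \<Rightarrow> 'a \<Rightarrow> bool" where
  "common_proj M M' A uh \<longleftrightarrow>
     (\<exists>V. open V \<and> uh \<in> V \<and>
        (\<forall>u\<in>V. \<exists>p\<in>A. (\<forall>v\<in>A. opsq M (u - p) \<le> opsq M (u - v))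
                      \<and> (\<forall>v\<in>A. opsq M' (u - p) \<le> opsq M' (u - v))))"

end

theory Submission
  imports Defs
begin


lemma INF_scale:
  fixes f :: "'b \<Rightarrow> real"
  assumes a: "a > 0"
  shows "(INF i\<in>S. ereal (a * f i)) = ereal a * (INF i\<in>S. ereal (f i))"
proof -
  have ge: "ereal c * (INF i\<in>S. ereal (g i)) \<le> (INF i\<in>S. ereal (c * g i))" if "c > 0" for c and g :: "'b \<Rightarrow> real"
  proof (rule INF_greatest)
    fix i assume "i \<in> S"
    then have "(INF i\<in>S. ereal (g i)) \<le> ereal (g i)" by (rule INF_lower)
    then have "ereal c * (INF i\<in>S. ereal (g i)) \<le> ereal c * ereal (g i)"
      using that by (intro ereal_mult_left_mono) auto
    then show "ereal c * (INF i\<in>S. ereal (g i)) \<le> ereal (c * g i)" by simp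
  qed
  have 1: "ereal (1/a) * (INF i\<in>S. ereal (a * f i)) \<le> (INF i\<in>S. ereal (f i))"
    using ge[of "1/a" "\<lambda>i. a * f i"] a by simp
  have "ereal a * (ereal (1/a) * (INF i\<in>S. ereal (a * f i))) \<le> ereal a * (INF i\<in>S. ereal (f i))"
    using 1 a by (intro ereal_mult_left_mono) auto
  moreover have "ereal a * (ereal (1/a) * (INF i\<in>S. ereal (a * f i))) = (INF i\<in>S. ereal (a * f i))"
    using a by (simp add: mult.assoc[symmetric])
  ultimately show ?thesis using ge[OF a, of f] by simp
qed

lemma L1:
  assumes "A \<noteq> {}" "ereal mI \<le> D + (INF v\<in>A. ereal (g v))"
  shows "D \<noteq> -\<infinity>"
proof
  assume "D = -\<infinity>"
  obtain v where "v \<in> A" using assms by auto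
  then have "(INF v\<in>A. ereal (g v)) \<le> ereal (g v)" by (rule INF_lower)
  then have "(INF v\<in>A. ereal (g v)) \<noteq> \<infinity>" by auto
  then have eq: "D + (INF v\<in>A. ereal (g v)) = -\<infinity>" using \<open>D = -\<infinity>\<close> by simp
  have "ereal mI \<le> -\<infinity>" using assms(2) unfolding eq .
  then show False by simp
qed

lemma L2:
  assumes "ereal mI \<le> ereal d + (INF v\<in>A. ereal (g v))" "v \<in> A"
  shows "mI \<le> d + g v"
proof -
  have "(INF v\<in>A. ereal (g v)) \<le> ereal (g v)" using assms(2) by (rule INF_lower)
  then have "ereal d + (INF v\<in>A. ereal (g v)) \<le> ereal d + ereal (g v)" by (rule add_left_mono)
  then have "ereal mI \<le> ereal d + ereal (g v)" using assms(1) by (rule order_trans[rotated])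
  then show ?thesis by simp
qed

lemma L3:
  assumes "\<forall>v\<in>A. mI \<le> d + g v"
  shows "ereal mI \<le> ereal d + (INF v\<in>A. ereal (g v))"
proof -
  have "ereal (mI - d) \<le> (INF v\<in>A. ereal (g v))"
    using assms by (intro INF_greatest) auto
  then show ?thesis
    by (cases "(INF v\<in>A. ereal (g v))") auto
qed


lemma core1:
  fixes m p :: "'b \<Rightarrow> real" and D :: ereal
  assumes ne: "A \<noteq> {}" and mI: "(INF v\<in>A. ereal (m v)) = ereal mI"
    and a: "a > 0"
    and cond: "a \<ge> 1 \<or> (\<exists>p0\<in>A. (\<forall>v\<in>A. m p0 \<le> m v) \<and> (\<forall>v\<in>A. m p0 - p p0 \<le> m v - p v))"
    and H: "ereal mI \<le> ereal a * D + (INF v\<in>A. ereal (m v - a * p v))"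
  shows "ereal mI \<le> D + (INF v\<in>A. ereal (m v - p v))"
proof -
  have low: "mI \<le> m v" if "v \<in> A" for v
  proof -
    have "(INF v\<in>A. ereal (m v)) \<le> ereal (m v)" using that by (rule INF_lower)
    then show ?thesis using mI by simp
  qed
  have "ereal a * D \<noteq> -\<infinity>" using L1[OF ne H] .
  then have Dn: "D \<noteq> -\<infinity>" using a by auto
  show ?thesis
  proof (cases D)
    case PInf then show ?thesis by simp
  next
    case MInf then show ?thesis using Dn by simp
  next
    case (real d)
    have H': "mI \<le> a * d + (m v - a * p v)" if "v \<in> A" for v
      using L2[where mI=mI and d="a*d" and A=A and g="\<lambda>v. m v - a * p v" and v=v] H real that by simp
    have "\<forall>v\<in>A. mI \<le> d + (m v - p v)"
      using cond
    proof
      assume a1: "a \<ge> 1"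
      show ?thesis
      proof
        fix v assume v: "v \<in> A"
        have h1: "mI \<le> a * d + (m v - a * p v)" using H' v .
        have h2: "(a - 1) * mI \<le> (a - 1) * m v" using a1 low[OF v] by (intro mult_left_mono) auto
        have "a * mI \<le> a * (d + (m v - p v))" using h1 h2 by (simp add: algebra_simps)
        then show "mI \<le> d + (m v - p v)" using a by simp
      qed
    next
      assume "\<exists>p0\<in>A. (\<forall>v\<in>A. m p0 \<le> m v) \<and> (\<forall>v\<in>A. m p0 - p p0 \<le> m v - p v)"
      then obtain p0 where p0: "p0 \<in> A" "\<forall>v\<in>A. m p0 \<le> m v" "\<forall>v\<in>A. m p0 - p p0 \<le> m v - p v" by blast
      have "ereal (m p0) \<le> (INF v\<in>A. ereal (m v))" using p0(2) by (intro INF_greatest) auto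
      then have eq: "mI = m p0" using mI low[OF p0(1)] by simp
      have "a * p p0 \<le> a * d" using H'[OF p0(1)] eq by simp
      then have "p p0 \<le> d" using a by simp
      then show ?thesis using p0(3) eq by force
    qed
    then show ?thesis using L3[where mI=mI and d=d and A=A and g="\<lambda>v. m v - p v"] real by simp
  qed
qed

lemma core2:
  fixes m p :: "'b \<Rightarrow> real" and D :: ereal
  assumes ne: "A \<noteq> {}" and mI: "(INF v\<in>A. ereal (m v)) = ereal mI"
    and a: "a > 0"
    and cond: "a \<le> 1 \<or> (\<exists>p0\<in>A. (\<forall>v\<in>A. m p0 \<le> m v) \<and> (\<forall>v\<in>A. m p0 - a * p p0 \<le> m v - a * p v))"
    and H: "ereal mI \<le> D + (INF v\<in>A. ereal (m v - p v))"
  shows "ereal mI \<le> ereal a * D + (INF v\<in>A. ereal (m v - a * p v))"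
proof -
  have low: "mI \<le> m v" if "v \<in> A" for v
  proof -
    have "(INF v\<in>A. ereal (m v)) \<le> ereal (m v)" using that by (rule INF_lower)
    then show ?thesis using mI by simp
  qed
  have Dn: "D \<noteq> -\<infinity>" using L1[OF ne H] .
  show ?thesis
  proof (cases D)
    case PInf then show ?thesis using a by simp
  next
    case MInf then show ?thesis using Dn by simp
  next
    case (real d)
    have H': "mI \<le> d + (m v - p v)" if "v \<in> A" for v
      using L2[where mI=mI and d=d and A=A and g="\<lambda>v. m v - p v" and v=v] H real that by simp
    have "\<forall>v\<in>A. mI \<le> a * d + (m v - a * p v)"
      using cond
    proof
      assume a1: "a \<le> 1"
      show ?thesis
      proof
        fix v assume v: "v \<in> A"
        have h1: "a * mI \<le> a * (d + (m v - p v))" using H' v a by (intro mult_left_mono) auto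
        have h2: "(1 - a) * mI \<le> (1 - a) * m v" using a1 low[OF v] by (intro mult_left_mono) auto
        show "mI \<le> a * d + (m v - a * p v)" using h1 h2 by (simp add: algebra_simps)
      qed
    next
      assume "\<exists>p0\<in>A. (\<forall>v\<in>A. m p0 \<le> m v) \<and> (\<forall>v\<in>A. m p0 - a * p p0 \<le> m v - a * p v)"
      then obtain p0 where p0: "p0 \<in> A" "\<forall>v\<in>A. m p0 \<le> m v" "\<forall>v\<in>A. m p0 - a * p p0 \<le> m v - a * p v" by blast
      have "ereal (m p0) \<le> (INF v\<in>A. ereal (m v))" using p0(2) by (intro INF_greatest) auto
      then have eq: "mI = m p0" using mI low[OF p0(1)] by simp
      have "p p0 \<le> d" using H'[OF p0(1)] eq by simp
      then have "a * p p0 \<le> a * d" using a by simp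
      then show ?thesis using p0(3) eq by force
    qed
    then show ?thesis using L3[where mI=mI and d="a*d" and A=A and g="\<lambda>v. m v - a * p v"] real by simp
  qed
qed


lemma opsq_minus[simp]: "opsq (op_minus M P) x = opsq M x - opsq P x"
  by (simp add: opsq_def op_minus_def inner_diff_left)

lemma opsq_scale[simp]: "opsq (op_scale c P) x = c * opsq P x"
  by (simp add: opsq_def op_scale_def)

lemma opdist2_scale: "a > 0 \<Longrightarrow> opdist2 (op_scale a N) z S = ereal a * opdist2 N z S"
  unfolding opdist2_def by (simp add: INF_scale)

lemma opdist2_finite:
  assumes "op_psd M" "uh \<in> A"
  obtains mI where "(INF v\<in>A. ereal (opsq M (u - v))) = ereal mI"
proof -
  have "0 \<le> (INF v\<in>A. ereal (opsq M (u - v)))"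
    using assms(1) by (intro INF_greatest) (auto simp: op_psd_def)
  moreover have "(INF v\<in>A. ereal (opsq M (u - v))) \<le> ereal (opsq M (u - uh))"
    using assms(2) by (rule INF_lower)
  ultimately show ?thesis using that
    by (cases "(INF v\<in>A. ereal (opsq M (u - v)))") auto
qed

lemma dir1:
  assumes graph: "wh \<in> T uh" and Mpos: "op_psd M" and alpha: "\<alpha> > 0"
    and cp: "\<alpha> < 1 \<longrightarrow> common_proj M (op_minus M P) (sv_inv T wh) uh"
    and H: "partially_subregular T (op_scale \<alpha> P) (op_scale \<alpha> N) M uh wh"
  shows "partially_subregular T P N M uh wh"
proof -
  let ?A = "sv_inv T wh"
  have uhA: "uh \<in> ?A" using graph by (simp add: sv_inv_def)
  obtain V where V: "open V" "uh \<in> V" and HV: "\<forall>u\<in>V. opdist2 (op_scale \<alpha> N) wh (T u)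
      + opdist2 (op_minus M (op_scale \<alpha> P)) u ?A \<ge> opdist2 M u ?A"
    using H unfolding partially_subregular_def by blast
  obtain V' where V': "open V'" "uh \<in> V'" and HV': "\<forall>u\<in>V'. \<alpha> < 1 \<longrightarrow> (\<exists>p\<in>?A.
      (\<forall>v\<in>?A. opsq M (u - p) \<le> opsq M (u - v)) \<and>
      (\<forall>v\<in>?A. opsq (op_minus M P) (u - p) \<le> opsq (op_minus M P) (u - v)))"
  proof (cases "\<alpha> < 1")
    case True then show ?thesis using cp that unfolding common_proj_def by blast
  next
    case False then show ?thesis using that[of UNIV] by auto
  qed
  show ?thesis unfolding partially_subregular_def
  proof (intro exI[of _ "V \<inter> V'"] conjI ballI)
    show "open (V \<inter> V')" using V V' by auto
    show "uh \<in> V \<inter> V'" using V V' by auto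
    fix u assume u: "u \<in> V \<inter> V'"
    obtain mI where mI: "(INF v\<in>?A. ereal (opsq M (u - v))) = ereal mI"
      using opdist2_finite[OF Mpos uhA] by blast
    have "ereal mI \<le> opdist2 N wh (T u) + (INF v\<in>?A. ereal (opsq M (u - v) - opsq P (u - v)))"
    proof (rule core1[where a=\<alpha>])
      show "?A \<noteq> {}" using uhA by auto
      show "(INF v\<in>?A. ereal (opsq M (u - v))) = ereal mI" by (rule mI)
      show "\<alpha> > 0" by (rule alpha)
      show "1 \<le> \<alpha> \<or> (\<exists>p0\<in>?A. (\<forall>v\<in>?A. opsq M (u - p0) \<le> opsq M (u - v)) \<and>
          (\<forall>v\<in>?A. opsq M (u - p0) - opsq P (u - p0) \<le> opsq M (u - v) - opsq P (u - v)))"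
        using HV' u by force
      show "ereal mI \<le> ereal \<alpha> * opdist2 N wh (T u) + (INF v\<in>?A. ereal (opsq M (u - v) - \<alpha> * opsq P (u - v)))"
      proof -
        have h: "opdist2 M u ?A \<le> opdist2 (op_scale \<alpha> N) wh (T u) + opdist2 (op_minus M (op_scale \<alpha> P)) u ?A"
          using HV u by blast
        then show ?thesis using mI
          by (simp add: opdist2_scale[OF alpha] opdist2_def[where T=M] opdist2_def[where T="op_minus M (op_scale \<alpha> P)"])
      qed
    qed
    then show "opdist2 M u ?A \<le> opdist2 N wh (T u) + opdist2 (op_minus M P) u ?A"
      using mI by (simp add: opdist2_def[where T=M] opdist2_def[where T="op_minus M P"])
  qed
qed

lemma dir2:
  assumes graph: "wh \<in> T uh" and Mpos: "op_psd M" and alpha: "\<alpha> > 0"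
    and cp: "\<alpha> > 1 \<longrightarrow> common_proj M (op_minus M (op_scale \<alpha> P)) (sv_inv T wh) uh"
    and H: "partially_subregular T P N M uh wh"
  shows "partially_subregular T (op_scale \<alpha> P) (op_scale \<alpha> N) M uh wh"
proof -
  let ?A = "sv_inv T wh"
  have uhA: "uh \<in> ?A" using graph by (simp add: sv_inv_def)
  obtain V where V: "open V" "uh \<in> V" and HV: "\<forall>u\<in>V. opdist2 N wh (T u)
      + opdist2 (op_minus M P) u ?A \<ge> opdist2 M u ?A"
    using H unfolding partially_subregular_def by blast
  obtain V' where V': "open V'" "uh \<in> V'" and HV': "\<forall>u\<in>V'. \<alpha> > 1 \<longrightarrow> (\<exists>p\<in>?A.
      (\<forall>v\<in>?A. opsq M (u - p) \<le> opsq M (u - v)) \<and>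
      (\<forall>v\<in>?A. opsq (op_minus M (op_scale \<alpha> P)) (u - p) \<le> opsq (op_minus M (op_scale \<alpha> P)) (u - v)))"
  proof (cases "\<alpha> > 1")
    case True then show ?thesis using cp that unfolding common_proj_def by blast
  next
    case False then show ?thesis using that[of UNIV] by auto
  qed
  show ?thesis unfolding partially_subregular_def
  proof (intro exI[of _ "V \<inter> V'"] conjI ballI)
    show "open (V \<inter> V')" using V V' by auto
    show "uh \<in> V \<inter> V'" using V V' by auto
    fix u assume u: "u \<in> V \<inter> V'"
    obtain mI where mI: "(INF v\<in>?A. ereal (opsq M (u - v))) = ereal mI"
      using opdist2_finite[OF Mpos uhA] by blast
    have "ereal mI \<le> ereal \<alpha> * opdist2 N wh (T u) + (INF v\<in>?A. ereal (opsq M (u - v) - \<alpha> * opsq P (u - v)))"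
    proof (rule core2[where a=\<alpha>])
      show "?A \<noteq> {}" using uhA by auto
      show "(INF v\<in>?A. ereal (opsq M (u - v))) = ereal mI" by (rule mI)
      show "\<alpha> > 0" by (rule alpha)
      show "\<alpha> \<le> 1 \<or> (\<exists>p0\<in>?A. (\<forall>v\<in>?A. opsq M (u - p0) \<le> opsq M (u - v)) \<and>
          (\<forall>v\<in>?A. opsq M (u - p0) - \<alpha> * opsq P (u - p0) \<le> opsq M (u - v) - \<alpha> * opsq P (u - v)))"
        using HV' u by force
      show "ereal mI \<le> opdist2 N wh (T u) + (INF v\<in>?A. ereal (opsq M (u - v) - opsq P (u - v)))"
      proof -
        have h: "opdist2 M u ?A \<le> opdist2 N wh (T u) + opdist2 (op_minus M P) u ?A"
          using HV u by blast
        then show ?thesis using mI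
          by (simp add: opdist2_def[where T=M] opdist2_def[where T="op_minus M P"])
      qed
    qed
    then show "opdist2 M u ?A \<le> opdist2 (op_scale \<alpha> N) wh (T u) + opdist2 (op_minus M (op_scale \<alpha> P)) u ?A"
      using mI by (simp add: opdist2_scale[OF alpha] opdist2_def[where T=M] opdist2_def[where T="op_minus M (op_scale \<alpha> P)"])
  qed
qed

theorem lemma4p7:
  fixes T :: "'a::{real_inner, complete_space} \<Rightarrow> 'a set"
    and P N M :: "'a \<Rightarrow> 'a"
    and uh wh :: 'a
    and \<alpha> :: real
  assumes graph: "wh \<in> T uh"
    and linP: "bounded_linear P" and linN: "bounded_linear N" and linM: "bounded_linear M"
    and Mpos: "op_psd M" and MP: "op_ge M P"
    and alpha: "\<alpha> > 0"
  shows "((\<alpha> < 1 \<longrightarrow> common_proj M (op_minus M P) (sv_inv T wh) uh) \<longrightarrow>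
            (partially_subregular T (op_scale \<alpha> P) (op_scale \<alpha> N) M uh wh
               \<longrightarrow> partially_subregular T P N M uh wh))
       \<and> ((\<alpha> > 1 \<longrightarrow> common_proj M (op_minus M (op_scale \<alpha> P)) (sv_inv T wh) uh) \<longrightarrow>
            (partially_subregular T P N M uh wh
               \<longrightarrow> partially_subregular T (op_scale \<alpha> P) (op_scale \<alpha> N) M uh wh))
       \<and> (common_proj M (op_minus M (op_scale (max \<alpha> 1) P)) (sv_inv T wh) uh \<longrightarrow>
            (partially_subregular T P N M uh wh
               \<longleftrightarrow> partially_subregular T (op_scale \<alpha> P) (op_scale \<alpha> N) M uh wh))"
proof (intro conjI impI)
  show "partially_subregular T P N M uh wh"
    if "\<alpha> < 1 \<longrightarrow> common_proj M (op_minus M P) (sv_inv T wh) uh"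
       "partially_subregular T (op_scale \<alpha> P) (op_scale \<alpha> N) M uh wh"
    using dir1[where T=T and uh=uh and wh=wh and M=M and P=P and N=N, OF graph Mpos alpha] that by blast
  show "partially_subregular T (op_scale \<alpha> P) (op_scale \<alpha> N) M uh wh"
    if "1 < \<alpha> \<longrightarrow> common_proj M (op_minus M (op_scale \<alpha> P)) (sv_inv T wh) uh"
       "partially_subregular T P N M uh wh"
    using dir2[where T=T and uh=uh and wh=wh and M=M and P=P and N=N, OF graph Mpos alpha] that by blast
  assume cp: "common_proj M (op_minus M (op_scale (max \<alpha> 1) P)) (sv_inv T wh) uh"
  have s1: "op_scale 1 P = P" by (simp add: op_scale_def)
  show "partially_subregular T P N M uh wh =
        partially_subregular T (op_scale \<alpha> P) (op_scale \<alpha> N) M uh wh"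
  proof (cases "\<alpha> \<le> 1")
    case True
    then have "max \<alpha> 1 = 1" by simp
    then have c: "common_proj M (op_minus M P) (sv_inv T wh) uh" using cp s1 by simp
    show ?thesis using dir1[where T=T and uh=uh and wh=wh and M=M and P=P and N=N, OF graph Mpos alpha] dir2[where T=T and uh=uh and wh=wh and M=M and P=P and N=N, OF graph Mpos alpha] c True by auto
  next
    case False
    then have "max \<alpha> 1 = \<alpha>" by simp
    then have c: "common_proj M (op_minus M (op_scale \<alpha> P)) (sv_inv T wh) uh" using cp by simp
    show ?thesis using dir1[where T=T and uh=uh and wh=wh and M=M and P=P and N=N, OF graph Mpos alpha] dir2[where T=T and uh=uh and wh=wh and M=M and P=P and N=N, OF graph Mpos alpha] c False by auto
  qed
qed

end
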